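(* Let $A=\sum_{k=0}^Na_k\partial^k\in\mathcal V[\partial]$ be a hereditary differential operator of degree $N$. Then for all $0\le k\le N$, $d(a_k)\le N+1$ (the inequality being vacuous when $a_k$ is a quasiconstant).
   Context: $\mathcal V$ is an algebra of differential functions in one variable $u$ (commutative $\mathbb C$-algebra containing $R=\mathbb C[u,u',\dots]$ with commuting derivations $\partial/\partial u^{(n)}$ extending those of $R$ and $\partial/\partial x$ commuting with them and vanishing on $R$, each element having finitely many nonzero partial derivatives); total derivative $\partial=\sum_nu^{(n+1)}\frac{\partial}{\partial u^{(n)}}+\frac{\partial}{\partial x}$. Standing assumptions: $\mathcal V$ is a normal domain with fraction field $\mathcal K$; $\mathcal C=\ker\partial$ is algebraically closed. The differential order is $d(F)=\max\{n\ge0:\partial F/\partial u^{(n)}\ne0\}$; $F$ is a quasiconstant if this set is empty. $X_F=\sum_nF^{(n)}\frac{\partial}{\partial u^{(n)}}$; $D_F=\sum_n\frac{\partial F}{\partial u^{(n)}}\partial^n$. Differential operators with $\partial a=a\partial+a'$; $X_F$ acts on operators coefficientwise; $\mathcal L_F(L)=X_F(L)-[D_F,L]$. A differential operator $A$ is hereditary if $\mathcal L_{A(G)}(A)=A\,\mathcal L_G(A)$ for all $G\in\mathcal V$. *)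

theory Defs
  imports Complex_Main "HOL-Computational_Algebra.Polynomial" "HOL-Computational_Algebra.Fraction_Field"
begin

text \<open>An algebra of differential functions in one variable u, over the type 'v
 (a commutative domain).  emb is the C-algebra structure map, uu n is u^(n),
 pd n is the partial derivative with respect to u^(n), dx is the partial derivative
 with respect to x.\<close>

record 'v dalg =
  emb :: "complex \<Rightarrow> 'v"
  uu  :: "nat \<Rightarrow> 'v"
  pd  :: "nat \<Rightarrow> 'v \<Rightarrow> 'v"
  dx  :: "'v \<Rightarrow> 'v"

definition is_derivation :: "('v::comm_ring_1 \<Rightarrow> 'v) \<Rightarrow> bool" where
  "is_derivation D \<longleftrightarrow> (\<forall>f g. D (f + g) = D f + D g \<and> D (f * g) = f * D g + g * D f)"

definition diff_alg :: "('v::idom) dalg \<Rightarrow> bool" where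
  "diff_alg V \<longleftrightarrow>
     (\<forall>z w. emb V (z + w) = emb V z + emb V w \<and> emb V (z * w) = emb V z * emb V w) \<and>
     emb V 1 = 1 \<and>
     (\<forall>n. is_derivation (pd V n)) \<and> is_derivation (dx V) \<and>
     (\<forall>n z. pd V n (emb V z) = 0) \<and> (\<forall>z. dx V (emb V z) = 0) \<and>
     (\<forall>n m. pd V n (uu V m) = (if n = m then 1 else 0)) \<and>
     (\<forall>m. dx V (uu V m) = 0) \<and>
     (\<forall>n m f. pd V n (pd V m f) = pd V m (pd V n f)) \<and>
     (\<forall>n f. dx V (pd V n f) = pd V n (dx V f)) \<and>
     (\<forall>f. finite {n. pd V n f \<noteq> 0})"

definition tder :: "('v::idom) dalg \<Rightarrow> 'v \<Rightarrow> 'v" where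
  "tder V f = (\<Sum>n\<in>{n. pd V n f \<noteq> 0}. uu V (Suc n) * pd V n f) + dx V f"

definition quasiconst :: "('v::idom) dalg \<Rightarrow> 'v \<Rightarrow> bool" where
  "quasiconst V f \<longleftrightarrow> (\<forall>n. pd V n f = 0)"

definition dord :: "('v::idom) dalg \<Rightarrow> 'v \<Rightarrow> nat" where
  "dord V f = Max {n. pd V n f \<noteq> 0}"

definition normal_dom :: "('v::idom) dalg \<Rightarrow> bool" where
  "normal_dom V \<longleftrightarrow>
     (\<forall>x :: 'v fract. (\<exists>p :: 'v poly. lead_coeff p = 1 \<and>
          poly (map_poly (\<lambda>a. Fract a 1) p) x = 0) \<longrightarrow> (\<exists>a. x = Fract a 1))"

definition consts_alg_closed :: "('v::idom) dalg \<Rightarrow> bool" where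
  "consts_alg_closed V \<longleftrightarrow>
     (\<forall>p :: 'v poly. (\<forall>i. tder V (coeff p i) = 0) \<and> degree p > 0 \<longrightarrow>
        (\<exists>r. tder V r = 0 \<and> poly p r = 0))"

text \<open>Differential operators sum_k a_k d^k are represented by 'v poly with coeff k = a_k.
 Composition uses d a = a d + a'.\<close>
definition op_mul :: "('v::idom) dalg \<Rightarrow> 'v poly \<Rightarrow> 'v poly \<Rightarrow> 'v poly" where
  "op_mul V L M = (\<Sum>i\<le>degree L. \<Sum>j\<le>degree M. \<Sum>l\<le>i.
      monom (of_nat (i choose l) * coeff L i * (tder V ^^ l) (coeff M j)) (i + j - l))"

definition op_apply :: "('v::idom) dalg \<Rightarrow> 'v poly \<Rightarrow> 'v \<Rightarrow> 'v" where
  "op_apply V L G = (\<Sum>k\<le>degree L. coeff L k * (tder V ^^ k) G)"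

definition evf :: "('v::idom) dalg \<Rightarrow> 'v \<Rightarrow> 'v \<Rightarrow> 'v" where
  "evf V F a = (\<Sum>n\<in>{n. pd V n a \<noteq> 0}. (tder V ^^ n) F * pd V n a)"

definition frechet :: "('v::idom) dalg \<Rightarrow> 'v \<Rightarrow> 'v poly" where
  "frechet V F = (\<Sum>n\<in>{n. pd V n F \<noteq> 0}. monom (pd V n F) n)"

definition lie_op :: "('v::idom) dalg \<Rightarrow> 'v \<Rightarrow> 'v poly \<Rightarrow> 'v poly" where
  "lie_op V F L = map_poly (evf V F) L
      - (op_mul V (frechet V F) L - op_mul V L (frechet V F))"

definition hereditary :: "('v::idom) dalg \<Rightarrow> 'v poly \<Rightarrow> bool" where
  "hereditary V A \<longleftrightarrow>
     (\<forall>G. lie_op V (op_apply V A G) A = op_mul V A (lie_op V G A))"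

end

theory Submission
  imports Defs
begin


locale dA =
  fixes V :: "('v::idom) dalg"
  assumes DA: "diff_alg V"
begin

lemma pd_add: "pd V n (f + g) = pd V n f + pd V n g"
  using DA unfolding diff_alg_def is_derivation_def by blast
lemma pd_mult: "pd V n (f * g) = f * pd V n g + g * pd V n f"
  using DA unfolding diff_alg_def is_derivation_def by blast
lemma dx_add: "dx V (f + g) = dx V f + dx V g"
  using DA unfolding diff_alg_def is_derivation_def by blast
lemma dx_mult: "dx V (f * g) = f * dx V g + g * dx V f"
  using DA unfolding diff_alg_def is_derivation_def by blast
lemma pd_emb: "pd V n (emb V z) = 0"
  using DA unfolding diff_alg_def by blast
lemma emb_one: "emb V 1 = 1"
  using DA unfolding diff_alg_def by blast
lemma emb_mult: "emb V (z * w) = emb V z * emb V w"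
  using DA unfolding diff_alg_def by blast
lemma pd_uu: "pd V n (uu V m) = (if n = m then 1 else 0)"
  using DA unfolding diff_alg_def by blast
lemma dx_uu: "dx V (uu V m) = 0"
  using DA unfolding diff_alg_def by blast
lemma pd_comm: "pd V n (pd V m f) = pd V m (pd V n f)"
  using DA unfolding diff_alg_def by blast
lemma dx_pd: "dx V (pd V n f) = pd V n (dx V f)"
  using DA unfolding diff_alg_def by blast
lemma fin_supp: "finite {n. pd V n f \<noteq> 0}"
  using DA unfolding diff_alg_def by blast

lemma pd_zero[simp]: "pd V n 0 = 0"
  using pd_add[of n 0 0] by (metis add.right_neutral add_left_cancel)
lemma dx_zero[simp]: "dx V 0 = 0"
  using dx_add[of 0 0] by (metis add.right_neutral add_left_cancel)
lemma pd_uminus: "pd V n (- f) = - pd V n f"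
  using pd_add[of n f "-f"] by (simp add: add_eq_0_iff2)
lemma pd_diff: "pd V n (f - g) = pd V n f - pd V n g"
  using pd_add[of n f "-g"] pd_uminus[of n g] by simp
lemma pd_sum: "pd V n (sum h S) = (\<Sum>x\<in>S. pd V n (h x))"
  by (induction S rule: infinite_finite_induct) (auto simp: pd_add)
lemma pd_one[simp]: "pd V n 1 = 0"
  using pd_emb[of n 1] emb_one by simp
lemma pd_of_nat[simp]: "pd V n (of_nat k) = 0"
  by (induction k) (auto simp: pd_add)
lemma pd_if: "pd V n (if c then x else 0) = (if c then pd V n x else 0)"
  by simp

definition ob :: "nat \<Rightarrow> 'v \<Rightarrow> bool" where
  "ob K f \<longleftrightarrow> (\<forall>n\<ge>K. pd V n f = 0)"

lemma obD: "ob K f \<Longrightarrow> K \<le> n \<Longrightarrow> pd V n f = 0"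
  unfolding ob_def by blast

lemma ob_exists: "\<exists>K. ob K f"
proof -
  obtain k where "{n. pd V n f \<noteq> 0} \<subseteq> {..<k}"
    using fin_supp[of f] finite_nat_iff_bounded by blast
  then show ?thesis unfolding ob_def by (intro exI[of _ k]) force
qed

lemma ob_mono: "ob K f \<Longrightarrow> K \<le> K' \<Longrightarrow> ob K' f"
  unfolding ob_def by auto
lemma ob_add: "ob K f \<Longrightarrow> ob K g \<Longrightarrow> ob K (f + g)"
  unfolding ob_def by (simp add: pd_add)
lemma ob_diff: "ob K f \<Longrightarrow> ob K g \<Longrightarrow> ob K (f - g)"
  unfolding ob_def by (simp add: pd_diff)
lemma ob_mult: "ob K f \<Longrightarrow> ob K g \<Longrightarrow> ob K (f * g)"
  unfolding ob_def by (simp add: pd_mult)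
lemma ob_zero: "ob K 0"
  unfolding ob_def by simp
lemma ob_one: "ob K 1"
  unfolding ob_def by simp
lemma ob_of_nat: "ob K (of_nat k)"
  unfolding ob_def by simp
lemma ob_sum: "(\<And>x. x \<in> S \<Longrightarrow> ob K (h x)) \<Longrightarrow> ob K (sum h S)"
  unfolding ob_def by (simp add: pd_sum)
lemma ob_if: "ob K f \<Longrightarrow> ob K (if c then f else 0)"
  using ob_zero by simp
lemma ob_uu: "m < K \<Longrightarrow> ob K (uu V m)"
  unfolding ob_def by (simp add: pd_uu)
lemma ob_pd: "ob K f \<Longrightarrow> ob K (pd V n f)"
  unfolding ob_def by (simp add: pd_comm[of _ n])

lemma tder_alt: assumes "ob K f"
  shows "tder V f = (\<Sum>n<K. uu V (Suc n) * pd V n f) + dx V f"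
proof -
  have "(\<Sum>n\<in>{n. pd V n f \<noteq> 0}. uu V (Suc n) * pd V n f) = (\<Sum>n<K. uu V (Suc n) * pd V n f)"
    apply (rule sum.mono_neutral_left)
    using assms unfolding ob_def by (auto simp: not_less) (meson not_less)
  then show ?thesis unfolding tder_def by simp
qed

lemma ob2: obtains K where "ob K f" "ob K g"
  using ob_exists[of f] ob_exists[of g] ob_mono by (metis max.cobounded1 max.cobounded2)

lemma tder_add: "tder V (f + g) = tder V f + tder V g"
proof -
  obtain K where K: "ob K f" "ob K g" by (rule ob2)
  have "ob K (f+g)" using K ob_add by blast
  then show ?thesis using K
    by (simp add: tder_alt pd_add dx_add distrib_left sum.distrib algebra_simps)
qed

lemma tder_mult: "tder V (f * g) = f * tder V g + g * tder V f"
proof -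
  obtain K where K: "ob K f" "ob K g" by (rule ob2)
  have "ob K (f*g)" using K ob_mult by blast
  then show ?thesis using K
    by (simp add: tder_alt pd_mult dx_mult distrib_left sum.distrib sum_distrib_left algebra_simps)
qed

lemma tder_zero[simp]: "tder V 0 = 0"
  using tder_add[of 0 0] by (metis add.right_neutral add_left_cancel)

lemma tder_uu: "tder V (uu V j) = uu V (Suc j)"
proof -
  have "ob (Suc j) (uu V j)" by (rule ob_uu) simp
  then have "tder V (uu V j) = (\<Sum>n<Suc j. uu V (Suc n) * pd V n (uu V j)) + dx V (uu V j)"
    by (rule tder_alt)
  also have "\<dots> = uu V (Suc j)" by (simp add: pd_uu dx_uu)
  finally show ?thesis .
qed

lemma tder_pow_uu: "(tder V ^^ l) (uu V m) = uu V (m + l)"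
  by (induction l) (auto simp: tder_uu)

lemma tder_pow_zero[simp]: "(tder V ^^ l) 0 = 0"
  by (induction l) auto

lemma pd_tder: "pd V n (tder V f) = tder V (pd V n f) + (if n = 0 then 0 else pd V (n - 1) f)"
proof -
  obtain K where K: "ob K f" using ob_exists by blast
  have K2: "ob K (pd V n f)" using K ob_pd by blast
  have "pd V n (tder V f) = (\<Sum>j<K. uu V (Suc j) * pd V j (pd V n f) + pd V j f * pd V n (uu V (Suc j))) + dx V (pd V n f)"
    by (simp add: tder_alt[OF K] pd_add pd_sum pd_mult pd_comm[of n] dx_pd)
  also have "\<dots> = tder V (pd V n f) + (\<Sum>j<K. pd V j f * pd V n (uu V (Suc j)))"
    by (simp add: tder_alt[OF K2] sum.distrib)
  also have "(\<Sum>j<K. pd V j f * pd V n (uu V (Suc j))) = (if n = 0 then 0 else pd V (n - 1) f)"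
  proof (cases n)
    case 0 then show ?thesis by (simp add: pd_uu)
  next
    case (Suc n')
    have "(\<Sum>j<K. pd V j f * pd V n (uu V (Suc j))) = (\<Sum>j<K. if j = n' then pd V j f else 0)"
      by (rule sum.cong) (auto simp: pd_uu Suc)
    also have "\<dots> = pd V n' f" using obD[OF K, of n'] by auto
    finally show ?thesis using Suc by simp
  qed
  finally show ?thesis .
qed

lemma ob_tder: "ob K f \<Longrightarrow> ob (Suc K) (tder V f)"
  unfolding ob_def by (auto simp: pd_tder)

lemma ob_tder_pow: "ob K f \<Longrightarrow> ob (K + l) ((tder V ^^ l) f)"
  by (induction l) (auto intro: ob_tder)

lemma top_pow: assumes "ob K f" "1 \<le> K"
  shows "pd V (K + l - 1) ((tder V ^^ l) f) = pd V (K - 1) f"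
proof (induction l)
  case 0 then show ?case by simp
next
  case (Suc l)
  have o: "ob (K + l) ((tder V ^^ l) f)" by (rule ob_tder_pow[OF assms(1)])
  have "pd V (K + Suc l - 1) ((tder V ^^ Suc l) f) = tder V (pd V (K + l) ((tder V ^^ l) f)) + pd V (K + l - 1) ((tder V ^^ l) f)"
    using assms(2) by (simp add: pd_tder)
  also have "\<dots> = pd V (K - 1) f" using obD[OF o, of "K+l"] Suc by simp
  finally show ?case .
qed

lemma sec_pow: assumes "ob K f" "2 \<le> K"
  shows "pd V (K + l - 2) ((tder V ^^ l) f) = pd V (K - 2) f + of_nat l * tder V (pd V (K - 1) f)"
proof (induction l)
  case 0 then show ?case by simp
next
  case (Suc l)
  have "pd V (K + Suc l - 2) ((tder V ^^ Suc l) f) = tder V (pd V (K + l - 1) ((tder V ^^ l) f)) + pd V (K + l - 2) ((tder V ^^ l) f)"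
    using assms(2) by (simp add: pd_tder numeral_2_eq_2)
  also have "\<dots> = tder V (pd V (K - 1) f) + (pd V (K - 2) f + of_nat l * tder V (pd V (K - 1) f))"
    using top_pow[OF assms(1)] assms(2) Suc by simp
  finally show ?case by (simp add: algebra_simps)
qed

lemma van_pow: "ob K f \<Longrightarrow> K + l \<le> M \<Longrightarrow> pd V M ((tder V ^^ l) f) = 0"
  using ob_tder_pow obD by blast


lemma sum_atMost_ext: "(d::nat) \<le> n \<Longrightarrow> (\<And>i. d < i \<Longrightarrow> i \<le> n \<Longrightarrow> f i = 0) \<Longrightarrow> sum f {..n} = sum f {..d}"
  by (rule sum.mono_neutral_right) auto

lemma coeff_op_mul_raw: "coeff (op_mul V L M) q = (\<Sum>i\<le>degree L. \<Sum>j\<le>degree M. \<Sum>l\<le>i.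
   if i + j - l = q then of_nat (i choose l) * coeff L i * (tder V ^^ l) (coeff M j) else 0)"
  by (simp add: op_mul_def coeff_sum coeff_monom)

lemma coeff_op_mul_ext: assumes "degree L \<le> n1" "degree M \<le> n2"
  shows "coeff (op_mul V L M) q = (\<Sum>i\<le>n1. \<Sum>j\<le>n2. \<Sum>l\<le>i.
   if i + j - l = q then of_nat (i choose l) * coeff L i * (tder V ^^ l) (coeff M j) else 0)"
proof -
  have "(\<Sum>i\<le>n1. \<Sum>j\<le>n2. \<Sum>l\<le>i.
   if i + j - l = q then of_nat (i choose l) * coeff L i * (tder V ^^ l) (coeff M j) else 0)
   = (\<Sum>i\<le>degree L. \<Sum>j\<le>n2. \<Sum>l\<le>i.
   if i + j - l = q then of_nat (i choose l) * coeff L i * (tder V ^^ l) (coeff M j) else 0)"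
    by (rule sum_atMost_ext[OF assms(1)]) (intro sum.neutral ballI, simp add: coeff_eq_0)
  also have "\<dots> = (\<Sum>i\<le>degree L. \<Sum>j\<le>degree M. \<Sum>l\<le>i.
   if i + j - l = q then of_nat (i choose l) * coeff L i * (tder V ^^ l) (coeff M j) else 0)"
    by (intro sum.cong refl sum_atMost_ext[OF assms(2)]) (intro sum.neutral ballI, simp add: coeff_eq_0)
  finally show ?thesis by (simp add: coeff_op_mul_raw)
qed

lemma evf_alt: "ob K a \<Longrightarrow> evf V F a = (\<Sum>n<K. (tder V ^^ n) F * pd V n a)"
  unfolding evf_def
  by (rule sum.mono_neutral_left) (auto simp: ob_def not_less, meson not_less)

lemma evf_zero: "evf V F 0 = 0"
  unfolding evf_def by simp

lemma coeff_frechet: "coeff (frechet V F) n = pd V n F"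
  unfolding frechet_def by (simp add: coeff_sum coeff_monom fin_supp)

lemma frechet_uu: "frechet V (uu V m) = monom 1 m"
proof -
  have "{n. pd V n (uu V m) \<noteq> 0} = {m}" by (auto simp: pd_uu)
  then show ?thesis unfolding frechet_def by (simp add: pd_uu)
qed

lemma pd_cXY: "pd V n X = 0 \<Longrightarrow> pd V n (of_nat b * X * Y) = of_nat b * (X * pd V n Y)"
  by (simp add: pd_mult algebra_simps)

lemma emb_nz: "z \<noteq> 0 \<Longrightarrow> emb V z \<noteq> 0"
  using emb_mult[of z "inverse z"] emb_one by auto

end

lemma sum_if_eq: "finite S \<Longrightarrow> (\<Sum>x\<in>S. if x = a \<and> P then v else 0) = (if a \<in> S \<and> P then (v::'a::comm_monoid_add) else 0)"
  by (cases P) auto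

lemma tdelta: "(\<Sum>i\<le>n1. \<Sum>j\<le>n2. \<Sum>l\<le>(i::nat). if i = i1 \<and> j = (j1::nat) \<and> l = l1 then v else 0)
   = (if i1 \<le> n1 \<and> j1 \<le> n2 \<and> l1 \<le> i1 then (v::'a::comm_monoid_add) else 0)"
proof -
  have "\<And>i j. (\<Sum>l\<le>i. if i = i1 \<and> j = j1 \<and> l = l1 then v else 0) = (if j = j1 \<and> (i = i1 \<and> l1 \<le> i) then v else 0)"
  proof -
    fix i j
    have "(\<Sum>l\<le>i. if i = i1 \<and> j = j1 \<and> l = l1 then v else 0) = (\<Sum>l\<le>i. if l = l1 \<and> (i = i1 \<and> j = j1) then v else 0)"
      by (intro sum.cong) auto
    also have "\<dots> = (if j = j1 \<and> (i = i1 \<and> l1 \<le> i) then v else 0)" by (subst sum_if_eq) auto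
    finally show "(\<Sum>l\<le>i. if i = i1 \<and> j = j1 \<and> l = l1 then v else 0) = (if j = j1 \<and> (i = i1 \<and> l1 \<le> i) then v else 0)" .
  qed
  then have "(\<Sum>i\<le>n1. \<Sum>j\<le>n2. \<Sum>l\<le>(i::nat). if i = i1 \<and> j = (j1::nat) \<and> l = l1 then v else 0)
     = (\<Sum>i\<le>n1. \<Sum>j\<le>n2. if j = j1 \<and> (i = i1 \<and> l1 \<le> i) then v else 0)" by simp
  also have "\<dots> = (\<Sum>i\<le>n1. if i = i1 \<and> (j1 \<le> n2 \<and> l1 \<le> i) then v else 0)"
    by (intro sum.cong refl, subst sum_if_eq) auto
  also have "\<dots> = (\<Sum>i\<le>n1. if i = i1 \<and> (j1 \<le> n2 \<and> l1 \<le> i1) then v else 0)"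
    by (intro sum.cong) auto
  also have "\<dots> = (if i1 \<le> n1 \<and> j1 \<le> n2 \<and> l1 \<le> i1 then v else 0)"
    by (subst sum_if_eq) auto
  finally show ?thesis .
qed

lemma tdelta_suc: "(\<Sum>i\<le>n1. \<Sum>j\<le>n2. \<Sum>l\<le>(i::nat). if i = i1 \<and> Suc j = p \<and> l = l1 then v j else 0)
   = (case p of 0 \<Rightarrow> 0 | Suc j1 \<Rightarrow> if i1 \<le> n1 \<and> j1 \<le> n2 \<and> l1 \<le> i1 then (v j1::'a::comm_monoid_add) else 0)"
proof (cases p)
  case 0 then show ?thesis by simp
next
  case (Suc j1)
  have "(\<Sum>i\<le>n1. \<Sum>j\<le>n2. \<Sum>l\<le>(i::nat). if i = i1 \<and> Suc j = p \<and> l = l1 then v j else 0)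
     = (\<Sum>i\<le>n1. \<Sum>j\<le>n2. \<Sum>l\<le>(i::nat). if i = i1 \<and> j = j1 \<and> l = l1 then v j1 else 0)"
    by (intro sum.cong refl) (auto simp: Suc)
  then show ?thesis by (simp add: tdelta Suc)
qed



locale hs = dA V for V :: "('v::idom) dalg" +
  fixes A :: "('v::idom) poly" and N D :: nat
  assumes degA: "degree A = N"
    and obA: "\<And>k. ob (Suc D) (coeff A k)"
    and D2: "N + 2 \<le> D"
begin

definition "m = D + N + 3"
definition "e k = pd V D (coeff A k)"
definition "E p = (case p of 0 \<Rightarrow> 0 | Suc k \<Rightarrow> e k)"
definition "G = uu V m"
definition "F = op_apply V A G"
definition "MM = m + N + D - 1"
definition "PF1 = pd V (m + N) F"
definition "PF0 = pd V (m + N - 1) F"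
definition "R = lie_op V G A"

lemma a_big: "N < k \<Longrightarrow> coeff A k = 0"
  using degA by (simp add: coeff_eq_0)

lemma e_big: "N < k \<Longrightarrow> e k = 0"
  by (simp add: e_def a_big)

lemma obAK: "Suc D \<le> K \<Longrightarrow> ob K (coeff A k)"
  using obA ob_mono by blast

lemma pdA0: "Suc D \<le> n \<Longrightarrow> pd V n (coeff A k) = 0"
  using obA obD by blast

lemma F_eq: "F = (\<Sum>k\<le>N. coeff A k * uu V (m + k))"
  unfolding F_def op_apply_def G_def by (simp add: degA tder_pow_uu)

lemma ob_F: "ob (m + N + 1) F"
  unfolding F_eq
  by (intro ob_sum ob_mult obAK ob_uu) (auto simp: m_def)

lemma pd_F_ge: assumes "m \<le> j" shows "pd V j F = coeff A (j - m)"
proof -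
  have "pd V j F = (\<Sum>k\<le>N. if k = j - m then coeff A k else 0)"
    unfolding F_eq pd_sum
    by (intro sum.cong refl) (use assms in \<open>auto simp: pd_mult pd_uu pdA0 m_def\<close>)
  also have "\<dots> = coeff A (j - m)" using a_big by auto
  finally show ?thesis .
qed

lemma PF1_eq: "PF1 = coeff A N"
  unfolding PF1_def by (simp add: pd_F_ge)

lemma T1: "pd V MM (evf V F (coeff A p)) = pd V (D - 1) (coeff A p) * PF1 + e p * (PF0 + of_nat D * tder V PF1)"
proof -
  have z: "\<And>n. pd V MM (pd V n (coeff A p)) = 0"
    using pd_comm pdA0 D2 by (simp add: MM_def m_def)
  have "pd V MM (evf V F (coeff A p)) = (\<Sum>n<Suc D. pd V n (coeff A p) * pd V MM ((tder V ^^ n) F))"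
    unfolding evf_alt[OF obA] pd_sum by (simp add: pd_mult z del: sum.lessThan_Suc)
  also have "\<dots> = (\<Sum>n<Suc D. (if n = D - 1 then pd V (D - 1) (coeff A p) * PF1 else 0)
          + (if n = D then e p * (PF0 + of_nat D * tder V PF1) else 0))"
  proof (intro sum.cong refl)
    fix n assume n: "n \<in> {..<Suc D}"
    show "pd V n (coeff A p) * pd V MM ((tder V ^^ n) F) = (if n = D - 1 then pd V (D - 1) (coeff A p) * PF1 else 0)
          + (if n = D then e p * (PF0 + of_nat D * tder V PF1) else 0)"
    proof (cases "n + 2 \<le> D")
      case True
      then have "pd V MM ((tder V ^^ n) F) = 0"
        by (intro van_pow[OF ob_F]) (simp add: MM_def)
      then show ?thesis using True by auto
    next
      case False
      then consider "n = D - 1" | "n = D" using n D2 by fastforce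
      then show ?thesis
      proof cases
        case 1
        have "pd V (m + N + 1 + n - 1) ((tder V ^^ n) F) = pd V (m + N + 1 - 1) F"
          by (rule top_pow[OF ob_F]) simp
        moreover have "m + N + 1 + n - 1 = MM" using 1 D2 by (simp add: MM_def)
        ultimately show ?thesis using 1 D2 by (simp add: PF1_def)
      next
        case 2
        have "pd V (m + N + 1 + n - 2) ((tder V ^^ n) F) = pd V (m + N + 1 - 2) F + of_nat n * tder V (pd V (m + N + 1 - 1) F)"
          by (rule sec_pow[OF ob_F]) (simp add: m_def)
        moreover have "m + N + 1 + n - 2 = MM" using 2 D2 by (simp add: MM_def)
        ultimately show ?thesis using 2 D2 by (simp add: PF1_def PF0_def e_def)
      qed
    qed
  qed
  also have "\<dots> = pd V (D - 1) (coeff A p) * PF1 + e p * (PF0 + of_nat D * tder V PF1)"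
    by (simp add: sum.distrib del: sum.lessThan_Suc)
  finally show ?thesis .
qed

lemma T3: "pd V MM (coeff (op_mul V A (frechet V F)) p) = 0"
  unfolding coeff_op_mul_raw pd_sum
proof (intro sum.neutral ballI)
  fix i j l assume i: "i \<in> {..degree A}" and l: "l \<in> {..i}"
  have "pd V MM ((tder V ^^ l) (coeff (frechet V F) j)) = 0"
    unfolding coeff_frechet
    by (rule van_pow[OF ob_pd[OF ob_F]]) (use i l degA D2 in \<open>auto simp: MM_def\<close>)
  moreover have "pd V MM (coeff A i) = 0" using pdA0 D2 by (simp add: MM_def m_def)
  ultimately show "pd V MM (if i + j - l = p then of_nat (i choose l) * coeff A i * (tder V ^^ l) (coeff (frechet V F) j) else 0) = 0"
    by (simp add: pd_cXY)
qed


lemma pdA_MM: "pd V MM ((tder V ^^ l) (coeff A j)) = 0" if "l + 2 \<le> m + N"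
  by (rule van_pow[OF obA]) (use that in \<open>simp add: MM_def\<close>)

lemma T2_pt: assumes "i \<le> m + N" "l \<le> i"
  shows "pd V MM (if i + j - l = p then of_nat (i choose l) * coeff (frechet V F) i * (tder V ^^ l) (coeff A j) else 0)
   = (if i = m + N \<and> j = p \<and> l = m + N then PF1 * (pd V (D - 1) (coeff A p) + of_nat (m + N) * tder V (e p)) else 0)
   + (if i = m + N \<and> Suc j = p \<and> l = m + N - 1 then of_nat (m + N) * PF1 * e j else 0)
   + (if i = m + N - 1 \<and> j = p \<and> l = m + N - 1 then PF0 * e p else 0)"
proof -
  have pz: "pd V MM (pd V i F) = 0"
    using pd_comm obD[OF ob_F] D2 by (simp add: MM_def)
  have L: "pd V MM (if i + j - l = p then of_nat (i choose l) * coeff (frechet V F) i * (tder V ^^ l) (coeff A j) else 0)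
     = (if i + j - l = p then of_nat (i choose l) * (pd V i F * pd V MM ((tder V ^^ l) (coeff A j))) else 0)"
    unfolding coeff_frechet by (simp add: pd_cXY[OF pz])
  show ?thesis
  proof (cases "l + 2 \<le> m + N")
    case True
    then show ?thesis unfolding L using pdA_MM[OF True] by auto
  next
    case False
    then consider "i = m + N" "l = m + N" | "i = m + N" "l = m + N - 1" | "i = m + N - 1" "l = m + N - 1"
      using assms by fastforce
    then show ?thesis
    proof cases
      case 1
      have "pd V (Suc D + l - 2) ((tder V ^^ l) (coeff A j)) = pd V (Suc D - 2) (coeff A j) + of_nat l * tder V (pd V (Suc D - 1) (coeff A j))"
        by (rule sec_pow[OF obA]) (use D2 in simp)
      moreover have "Suc D + l - 2 = MM" using 1 D2 by (simp add: MM_def m_def)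
      ultimately show ?thesis unfolding L using 1 D2 by (auto simp: PF1_def e_def m_def)
    next
      case 2
      have "pd V (Suc D + l - 1) ((tder V ^^ l) (coeff A j)) = pd V (Suc D - 1) (coeff A j)"
        by (rule top_pow[OF obA]) simp
      moreover have "Suc D + l - 1 = MM" using 2 D2 by (simp add: MM_def m_def)
      moreover have "i + j - l = Suc j" using 2 by (simp add: m_def)
      moreover have "(i choose l) = i"
      proof -
        have "i = Suc l" using 2 by (simp add: m_def)
        then show ?thesis by simp
      qed
      ultimately show ?thesis unfolding L using 2 D2 by (auto simp: PF1_def e_def m_def)
    next
      case 3
      have "pd V (Suc D + l - 1) ((tder V ^^ l) (coeff A j)) = pd V (Suc D - 1) (coeff A j)"
        by (rule top_pow[OF obA]) simp
      moreover have "Suc D + l - 1 = MM" using 3 D2 by (simp add: MM_def m_def)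
      ultimately show ?thesis unfolding L using 3 D2 by (auto simp: PF0_def e_def m_def)
    qed
  qed
qed

lemma deg_fr: "degree (frechet V F) \<le> m + N"
  by (rule degree_le) (auto simp: coeff_frechet intro: obD[OF ob_F])

lemma T2: "pd V MM (coeff (op_mul V (frechet V F) A) p) = PF1 * (pd V (D - 1) (coeff A p) + of_nat (m + N) * tder V (e p))
   + of_nat (m + N) * PF1 * E p + PF0 * e p"
proof -
  have "pd V MM (coeff (op_mul V (frechet V F) A) p) =
     (\<Sum>i\<le>m + N. \<Sum>j\<le>N. \<Sum>l\<le>i. (if i = m + N \<and> j = p \<and> l = m + N then PF1 * (pd V (D - 1) (coeff A p) + of_nat (m + N) * tder V (e p)) else 0)
   + (if i = m + N \<and> Suc j = p \<and> l = m + N - 1 then of_nat (m + N) * PF1 * e j else 0)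
   + (if i = m + N - 1 \<and> j = p \<and> l = m + N - 1 then PF0 * e p else 0))"
    unfolding coeff_op_mul_ext[OF deg_fr, of A N, unfolded degA, simplified] pd_sum
    by (intro sum.cong refl T2_pt) auto
  also have "\<dots> = (if p \<le> N then PF1 * (pd V (D - 1) (coeff A p) + of_nat (m + N) * tder V (e p)) else 0)
     + (case p of 0 \<Rightarrow> 0 | Suc j1 \<Rightarrow> if j1 \<le> N then of_nat (m + N) * PF1 * e j1 else 0)
     + (if p \<le> N then PF0 * e p else 0)"
    by (simp only: sum.distrib tdelta tdelta_suc) (auto split: nat.split)
  also have "\<dots> = PF1 * (pd V (D - 1) (coeff A p) + of_nat (m + N) * tder V (e p))
   + of_nat (m + N) * PF1 * E p + PF0 * e p"
    by (cases p) (auto simp: E_def e_big a_big e_def)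
  finally show ?thesis .
qed


definition "c1 j = coeff (op_mul V (monom 1 m) A) j"
definition "c2 j = coeff (op_mul V A (monom 1 m)) j"

lemma r_eq: "coeff R j = evf V G (coeff A j) - (c1 j - c2 j)"
  unfolding R_def lie_op_def c1_def c2_def G_def
  by (simp add: frechet_uu coeff_map_poly evf_zero)

lemma x_eq: "evf V G (coeff A j) = (\<Sum>n<Suc D. uu V (m + n) * pd V n (coeff A j))"
  unfolding evf_alt[OF obA] G_def tder_pow_uu ..

lemma ob_x: "ob (m + D + 1) (evf V G (coeff A j))"
  unfolding x_eq by (intro ob_sum ob_mult ob_uu ob_pd obAK) auto

lemma pdz: "Suc D \<le> K \<Longrightarrow> pd V K (pd V n (coeff A j)) = 0"
  using pdA0[of K j] by (simp add: pd_comm[of K n])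

lemma pd_x1: "pd V (m + D) (evf V G (coeff A j)) = e j"
proof -
  have "pd V (m + D) (evf V G (coeff A j)) = (\<Sum>n<Suc D. if n = D then pd V n (coeff A j) else 0)"
    unfolding x_eq pd_sum
    by (intro sum.cong refl) (auto simp: pd_mult pd_uu pdz m_def)
  then show ?thesis by (simp add: e_def)
qed

lemma pd_x0: "pd V (m + D - 1) (evf V G (coeff A j)) = pd V (D - 1) (coeff A j)"
proof -
  have "pd V (m + D - 1) (evf V G (coeff A j)) = (\<Sum>n<Suc D. if n = D - 1 then pd V n (coeff A j) else 0)"
    unfolding x_eq pd_sum
    by (intro sum.cong refl) (use D2 in \<open>auto simp: pd_mult pd_uu pdz m_def\<close>)
  then show ?thesis by simp
qed

lemma ob_monom_coeff: "ob K (coeff (monom 1 m) i)"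
  by (simp add: coeff_monom ob_one ob_zero)

lemma c1_ext: "c1 j = (\<Sum>i\<le>m. \<Sum>j'\<le>N. \<Sum>l\<le>i.
   if i + j' - l = j then of_nat (i choose l) * coeff (monom 1 m) i * (tder V ^^ l) (coeff A j') else 0)"
  unfolding c1_def by (rule coeff_op_mul_ext) (auto simp: degA degree_monom_le)

lemma ob_c1: "ob (m + D + 1) (c1 j)"
  unfolding c1_ext
  by (intro ob_sum ob_if ob_mult ob_of_nat ob_monom_coeff ob_mono[OF ob_tder_pow[OF obA]]) auto

lemma ob_c2: "ob (m + D - 1) (c2 j)"
  unfolding c2_def coeff_op_mul_raw
  by (intro ob_sum ob_if ob_mult ob_of_nat obAK ob_mono[OF ob_tder_pow[OF ob_monom_coeff[of 0]]])
    (use D2 degA in \<open>auto simp: m_def\<close>)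

lemma c1_pt1: assumes "i \<le> m" "l \<le> i"
  shows "pd V (m + D) (if i + j' - l = j then of_nat (i choose l) * coeff (monom 1 m) i * (tder V ^^ l) (coeff A j') else 0)
    = (if i = m \<and> j' = j \<and> l = m then e j else 0)"
proof (cases "i = m")
  case False then show ?thesis by (simp add: coeff_monom)
next
  case True
  show ?thesis
  proof (cases "l = m")
    case False
    then have "pd V (m + D) ((tder V ^^ l) (coeff A j')) = 0"
      using assms True by (intro van_pow[OF obA]) simp
    then show ?thesis using False True by (simp add: coeff_monom pd_mult)
  next
    case l: True
    have "pd V (Suc D + l - 1) ((tder V ^^ l) (coeff A j')) = pd V (Suc D - 1) (coeff A j')"
      by (rule top_pow[OF obA]) simp
    then show ?thesis using l True by (auto simp: coeff_monom pd_mult e_def add.commute)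
  qed
qed

lemma pd_c1_1: "pd V (m + D) (c1 j) = e j"
proof -
  have "pd V (m + D) (c1 j) = (\<Sum>i\<le>m. \<Sum>j'\<le>N. \<Sum>l\<le>i. if i = m \<and> j' = j \<and> l = m then e j else 0)"
    unfolding c1_ext pd_sum by (intro sum.cong refl c1_pt1) auto
  also have "\<dots> = e j" by (simp add: tdelta e_big)
  finally show ?thesis .
qed

lemma c1_pt0: assumes "i \<le> m" "l \<le> i"
  shows "pd V (m + D - 1) (if i + j' - l = j then of_nat (i choose l) * coeff (monom 1 m) i * (tder V ^^ l) (coeff A j') else 0)
    = (if i = m \<and> j' = j \<and> l = m then pd V (D - 1) (coeff A j) + of_nat m * tder V (e j) else 0)
     + (if i = m \<and> Suc j' = j \<and> l = m - 1 then of_nat m * e j' else 0)"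
proof (cases "i = m")
  case False then show ?thesis by (simp add: coeff_monom)
next
  case True
  show ?thesis
  proof (cases "l + 2 \<le> m")
    case l2: True
    then have "pd V (m + D - 1) ((tder V ^^ l) (coeff A j')) = 0"
      using assms True by (intro van_pow[OF obA]) simp
    then show ?thesis using l2 True by (auto simp: coeff_monom pd_mult)
  next
    case False
    then consider "l = m" | "l = m - 1" using assms True by fastforce
    then show ?thesis
    proof cases
      case 1
      have "pd V (Suc D + l - 2) ((tder V ^^ l) (coeff A j')) = pd V (Suc D - 2) (coeff A j') + of_nat l * tder V (pd V (Suc D - 1) (coeff A j'))"
        by (rule sec_pow[OF obA]) (use D2 in simp)
      moreover have "Suc D + l - 2 = m + D - 1" using 1 D2 by (simp add: m_def)
      ultimately show ?thesis using 1 True D2 by (auto simp: coeff_monom pd_mult e_def m_def)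
    next
      case 2
      have "pd V (Suc D + l - 1) ((tder V ^^ l) (coeff A j')) = pd V (Suc D - 1) (coeff A j')"
        by (rule top_pow[OF obA]) simp
      moreover have "Suc D + l - 1 = m + D - 1" using 2 D2 by (simp add: m_def)
      moreover have "i + j' - l = Suc j'" using 2 True by (simp add: m_def)
      moreover have "(i choose l) = i"
      proof -
        have "i = Suc l" using 2 True by (simp add: m_def)
        then show ?thesis by simp
      qed
      moreover have "m \<noteq> 0" by (simp add: m_def)
      ultimately show ?thesis using 2 True by (auto simp: coeff_monom pd_mult e_def)
    qed
  qed
qed

lemma pd_c1_0: "pd V (m + D - 1) (c1 j) = pd V (D - 1) (coeff A j) + of_nat m * tder V (e j) + of_nat m * E j"
proof -
  have "pd V (m + D - 1) (c1 j) = (\<Sum>i\<le>m. \<Sum>j'\<le>N. \<Sum>l\<le>i.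
       (if i = m \<and> j' = j \<and> l = m then pd V (D - 1) (coeff A j) + of_nat m * tder V (e j) else 0)
     + (if i = m \<and> Suc j' = j \<and> l = m - 1 then of_nat m * e j' else 0))"
    unfolding c1_ext pd_sum by (intro sum.cong refl c1_pt0) auto
  also have "\<dots> = (if j \<le> N then pd V (D - 1) (coeff A j) + of_nat m * tder V (e j) else 0)
     + (case j of 0 \<Rightarrow> 0 | Suc j1 \<Rightarrow> if j1 \<le> N then of_nat m * e j1 else 0)"
    by (simp only: sum.distrib tdelta tdelta_suc) (auto split: nat.split)
  also have "\<dots> = pd V (D - 1) (coeff A j) + of_nat m * tder V (e j) + of_nat m * E j"
    by (cases j) (auto simp: E_def e_big a_big e_def)
  finally show ?thesis .
qed

lemma ob_r: "ob (m + D + 1) (coeff R j)"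
  unfolding r_eq
  by (intro ob_diff ob_x ob_c1 ob_mono[OF ob_c2]) simp

lemma pd_r1: "pd V (m + D) (coeff R j) = 0"
  unfolding r_eq using obD[OF ob_c2, of "m + D"] by (simp add: pd_diff pd_x1 pd_c1_1)

lemma pd_r0: "pd V (m + D - 1) (coeff R j) = - (of_nat m * (tder V (e j) + E j))"
proof -
  have "pd V (m + D - 1) (coeff R j) = pd V (m + D - 1) (evf V G (coeff A j)) - (pd V (m + D - 1) (c1 j) - pd V (m + D - 1) (c2 j))"
    by (simp only: r_eq pd_diff)
  also have "\<dots> = - (of_nat m * (tder V (e j) + E j))"
    unfolding pd_x0 pd_c1_0 obD[OF ob_c2 order_refl] by (simp add: algebra_simps)
  finally show ?thesis .
qed


lemma RHS_pt: assumes "i \<le> N" "l \<le> i"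
  shows "pd V MM (if i + j - l = p then of_nat (i choose l) * coeff A i * (tder V ^^ l) (coeff R j) else 0)
   = (if i = N \<and> j = p \<and> l = N then - (coeff A N * (of_nat m * (tder V (e p) + E p))) else 0)"
proof -
  have pz: "pd V MM (coeff A i) = 0" using pdA0 D2 by (simp add: MM_def m_def)
  have L: "pd V MM (if i + j - l = p then of_nat (i choose l) * coeff A i * (tder V ^^ l) (coeff R j) else 0)
    = (if i + j - l = p then of_nat (i choose l) * (coeff A i * pd V MM ((tder V ^^ l) (coeff R j))) else 0)"
    by (simp add: pd_cXY[OF pz])
  show ?thesis
  proof (cases "l + 2 \<le> N")
    case True
    have "pd V MM ((tder V ^^ l) (coeff R j)) = 0"
      by (rule van_pow[OF ob_r]) (use True in \<open>simp add: MM_def\<close>)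
    then show ?thesis unfolding L using True by auto
  next
    case False
    then consider "l + 1 = N" | "l = N" using assms by fastforce
    then show ?thesis
    proof cases
      case 1
      have "pd V (m + D + 1 + l - 1) ((tder V ^^ l) (coeff R j)) = pd V (m + D + 1 - 1) (coeff R j)"
        by (rule top_pow[OF ob_r]) simp
      moreover have "m + D + 1 + l - 1 = MM" using 1 by (simp add: MM_def)
      ultimately have "pd V MM ((tder V ^^ l) (coeff R j)) = 0" using pd_r1 by simp
      then show ?thesis unfolding L using 1 by auto
    next
      case 2
      have "pd V (m + D + 1 + l - 2) ((tder V ^^ l) (coeff R j)) = pd V (m + D + 1 - 2) (coeff R j) + of_nat l * tder V (pd V (m + D + 1 - 1) (coeff R j))"
        by (rule sec_pow[OF ob_r]) (simp add: m_def)
      moreover have "m + D + 1 + l - 2 = MM" using 2 D2 by (simp add: MM_def m_def)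
      moreover have "m + D + 1 - 2 = m + D - 1" by simp
      ultimately have "pd V MM ((tder V ^^ l) (coeff R j)) = - (of_nat m * (tder V (e j) + E j))"
        using pd_r1 pd_r0 by simp
      then show ?thesis unfolding L using 2 assms by auto
    qed
  qed
qed

lemma RHS: "pd V MM (coeff (op_mul V A R) p) = - (coeff A N * (of_nat m * (tder V (e p) + E p)))"
proof -
  have "pd V MM (coeff (op_mul V A R) p) = (\<Sum>i\<le>N. \<Sum>j\<le>degree R + p. \<Sum>l\<le>i.
      if i = N \<and> j = p \<and> l = N then - (coeff A N * (of_nat m * (tder V (e p) + E p))) else 0)"
    unfolding coeff_op_mul_ext[of A N R "degree R + p", unfolded degA, simplified] pd_sum
    by (intro sum.cong refl RHS_pt) auto
  also have "\<dots> = - (coeff A N * (of_nat m * (tder V (e p) + E p)))"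
    by (simp only: tdelta) simp
  finally show ?thesis .
qed

lemma main_eq: assumes "hereditary V A"
  shows "of_nat D * tder V (coeff A N) * e p = of_nat N * coeff A N * (tder V (e p) + E p)"
proof -
  have "lie_op V F A = op_mul V A R"
    using assms unfolding hereditary_def F_def R_def by blast
  then have "pd V MM (coeff (lie_op V F A) p) = pd V MM (coeff (op_mul V A R) p)" by simp
  moreover have "coeff (lie_op V F A) p = evf V F (coeff A p) - (coeff (op_mul V (frechet V F) A) p - coeff (op_mul V A (frechet V F)) p)"
    unfolding lie_op_def by (simp add: coeff_map_poly evf_zero)
  ultimately have h: "pd V MM (evf V F (coeff A p)) - (pd V MM (coeff (op_mul V (frechet V F) A) p) - pd V MM (coeff (op_mul V A (frechet V F)) p))
     = pd V MM (coeff (op_mul V A R) p)"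
    by (simp add: pd_diff)
  have h2: "pd V (D - 1) (coeff A p) * coeff A N + e p * (PF0 + of_nat D * tder V (coeff A N)) -
      (coeff A N * (pd V (D - 1) (coeff A p) + (of_nat m + of_nat N) * tder V (e p)) + (of_nat m + of_nat N) * coeff A N * E p + PF0 * e p)
     = - (coeff A N * (of_nat m * (tder V (e p) + E p)))"
    using h unfolding T1 T2 T3 RHS PF1_eq by simp
  from h2 show ?thesis by algebra
qed


lemma main_eq': assumes "hereditary V A"
  shows "of_nat D * tder V (coeff A N) * pd V D (coeff A p) = of_nat N * coeff A N * (tder V (pd V D (coeff A p)) + (case p of 0 \<Rightarrow> 0 | Suc k \<Rightarrow> pd V D (coeff A k)))"
  using main_eq[OF assms, of p] unfolding e_def E_def .

end

lemma (in dA) emb_of_nat: "emb V (of_nat n) = of_nat n"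
proof (induction n)
  case 0
  have "emb V 0 = emb V 0 + emb V 0" using DA unfolding diff_alg_def by (metis add_0)
  then show ?case by (metis add.right_neutral add_left_cancel of_nat_0)
next
  case (Suc n)
  have "emb V (1 + of_nat n) = emb V 1 + emb V (of_nat n)" using DA unfolding diff_alg_def by blast
  then show ?case using Suc emb_one by simp
qed

lemma (in dA) of_nat_nz: "n \<noteq> 0 \<Longrightarrow> (of_nat n :: 'v) \<noteq> 0"
  using emb_nz[of "of_nat n"] emb_of_nat[of n] by simp

theorem proposition2p20:
  fixes V :: "('v::idom) dalg" and A :: "'v poly" and N :: nat
  assumes "diff_alg V"
    and "normal_dom V"
    and "consts_alg_closed V"
    and "hereditary V A"
    and "degree A = N"
  shows "\<forall>k \<le> N. \<not> quasiconst V (coeff A k) \<longrightarrow> dord V (coeff A k) \<le> N + 1"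
proof (rule ccontr)
  assume "\<not> ?thesis"
  then obtain k0 where k0: "k0 \<le> N" "\<not> quasiconst V (coeff A k0)" "N + 1 < dord V (coeff A k0)"
    by auto
  interpret dA V by unfold_locales (rule assms(1))
  define S where "S = (\<Union>k\<in>{..N}. {n. pd V n (coeff A k) \<noteq> 0})"
  have finS: "finite S" using fin_supp by (auto simp: S_def)
  have sub: "{n. pd V n (coeff A k0) \<noteq> 0} \<subseteq> S" using k0(1) by (auto simp: S_def)
  have ne: "{n. pd V n (coeff A k0) \<noteq> 0} \<noteq> {}" using k0(2) by (auto simp: quasiconst_def)
  define D where "D = Max S"
  have "dord V (coeff A k0) \<le> D" unfolding dord_def D_def
    by (rule Max_mono[OF sub ne finS])
  then have D2: "N + 2 \<le> D" using k0(3) by simp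
  have "D \<in> S" unfolding D_def using finS sub ne by (intro Max_in) auto
  then obtain k1 where k1: "k1 \<le> N" "pd V D (coeff A k1) \<noteq> 0" by (auto simp: S_def)
  have obA: "ob (Suc D) (coeff A k)" for k
    unfolding ob_def
  proof (intro allI impI)
    fix n assume n: "Suc D \<le> n"
    show "pd V n (coeff A k) = 0"
    proof (cases "k \<le> N")
      case True
      show ?thesis
      proof (rule ccontr)
        assume "pd V n (coeff A k) \<noteq> 0"
        then have "n \<in> S" using True by (auto simp: S_def)
        then have "n \<le> D" unfolding D_def using finS by simp
        then show False using n by simp
      qed
    next
      case False
      then show ?thesis using assms(5) by (simp add: coeff_eq_0)
    qed
  qed
  interpret hs V A N D by unfold_locales (use assms(5) obA D2 in auto)
  note eq = main_eq'[OF assms(4)]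
  have "coeff A k1 \<noteq> 0" using k1(2) by auto
  then have "A \<noteq> 0" by auto
  then have aN: "coeff A N \<noteq> 0" using assms(5) leading_coeff_neq_0 by blast
  show False
  proof (cases "N = 0")
    case True
    then have k10: "k1 = 0" using k1 by simp
    have "pd V (Suc D) (tder V (coeff A 0)) = pd V D (coeff A 0)"
      using pd_tder[of "Suc D" "coeff A 0"] obD[OF obA order_refl] by simp
    then have t: "tder V (coeff A 0) \<noteq> 0" using k1(2) k10 by auto
    have "of_nat D * tder V (coeff A 0) * pd V D (coeff A 0) = 0" using eq[of 0] True by simp
    moreover have "(of_nat D :: 'v) \<noteq> 0" using D2 by (intro of_nat_nz) simp
    ultimately show False using t k1(2) k10 by simp
  next
    case False
    have nz: "(of_nat N :: 'v) \<noteq> 0" using False by (rule of_nat_nz)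
    have all: "pd V D (coeff A (N + 1 - t)) = 0" for t
    proof (induction t)
      case 0 then show ?case using assms(5) by (simp add: coeff_eq_0)
    next
      case (Suc t)
      show ?case
      proof (cases "N + 1 - t")
        case 0 then show ?thesis using Suc.IH by simp
      next
        case (Suc q)
        have "0 = of_nat N * coeff A N * pd V D (coeff A q)"
          using eq[of "N + 1 - t"] Suc \<open>pd V D (coeff A (N + 1 - t)) = 0\<close> by simp
        then have "pd V D (coeff A q) = 0" using nz aN by simp
        moreover have "N + 1 - Suc t = q" using Suc by simp
        ultimately show ?thesis by simp
      qed
    qed
    have "N + 1 - (N + 1 - k1) = k1" using k1(1) by simp
    then show False using all[of "N + 1 - k1"] k1(2) by simp
  qed
qed

end
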